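(* Assume in addition that all $X_t$ have the same expectation $\mu$. For all integers $t,\tau\ge1$ with $\min(t,\tau)\ge2$, all $\delta>0$ and all $\eta>0$, writing $S=\{\max(1,t-\tau+1),\dots,t\}$, $$\mathbb{P}\left(\sum_{s\in S}\epsilon_s>0,\ \frac{\sum_{s\in S}(X_s-\mu)\epsilon_s}{\sqrt{\sum_{s\in S}\epsilon_s}}>\delta\right)\le\left\lceil\frac{\log(\min(t,\tau))}{\log(1+\eta)}\right\rceil\exp\!\left(-\frac{2\delta^2}{B^2}\Big(1-\frac{\eta^2}{16}\Big)\right).$$
   Context: On a probability space $(\Omega,\mathcal A,\mathbb P)$, let $(X_t)_{t\ge1}$ be independent random variables with $X_t\in[0,B]$ a.s. Let $(\mathcal F_t)_{t\ge0}$ be a filtration with $\sigma(X_1,\dots,X_t)\subset\mathcal F_t$ and $X_s$ independent of $\mathcal F_t$ for $s>t$. Let $(\epsilon_t)_{t\ge1}$ be $\{0,1\}$-valued with $\epsilon_t$ $\mathcal F_{t-1}$-measurable. *)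

theory Defs
  imports "HOL-Probability.Probability"
begin

end

theory Submission
  imports Defs
begin


lemma (in prob_space) indep_set_mono':
  assumes "indep_set A B" "A' \<subseteq> A" "B' \<subseteq> B"
  shows "indep_set A' B'"
  using assms indep_setD_ev1[OF assms(1)] indep_setD_ev2[OF assms(1)]
  by (intro indep_setI) (auto intro: indep_setD)

lemma (in prob_space) indep_prod_integral:
  assumes ind: "indep_set (sets (vimage_algebra (space M) Y borel)) (sets G)"
    and sub: "subalgebra M G"
    and Y: "Y \<in> borel_measurable M" and g: "g \<in> borel_measurable borel"
    and W: "W \<in> borel_measurable G"
    and i1: "integrable M (\<lambda>\<omega>. g (Y \<omega>) :: real)" and i2: "integrable M W"
  shows "(\<integral>\<omega>. g (Y \<omega>) * W \<omega> \<partial>M) = (\<integral>\<omega>. g (Y \<omega>) \<partial>M) * (\<integral>\<omega>. W \<omega> \<partial>M)"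
proof (rule indep_var_lebesgue_integral[OF _ i1 i2])
  have WM: "W \<in> borel_measurable M"
    using W sub by (meson measurable_from_subalg)
  have gY: "(\<lambda>\<omega>. g (Y \<omega>)) \<in> borel_measurable M" using g Y by measurable
  have s1: "sigma_sets (space M) {(\<lambda>\<omega>. g (Y \<omega>)) -` A \<inter> space M | A. A \<in> sets borel}
      \<subseteq> sets (vimage_algebra (space M) Y borel)"
  proof -
    interpret V: sigma_algebra "space M" "sets (vimage_algebra (space M) Y borel)"
      using sets.sigma_algebra_axioms[of "vimage_algebra (space M) Y borel"] by simp
    show ?thesis
    proof (rule V.sigma_sets_subset, safe)
      fix A :: "real set" assume A: "A \<in> sets borel"
      have "g -` A \<in> sets borel" using measurable_sets[OF g A] by simp
      then have "Y -` (g -` A) \<inter> space M \<in> sets (vimage_algebra (space M) Y borel)"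
        unfolding sets_vimage_algebra by (intro sigma_sets.Basic) blast
      then show "(\<lambda>\<omega>. g (Y \<omega>)) -` A \<inter> space M \<in> sets (vimage_algebra (space M) Y borel)"
        by (simp add: vimage_def)
    qed
  qed
  have s2: "sigma_sets (space M) {W -` A \<inter> space M | A. A \<in> sets borel} \<subseteq> sets G"
  proof -
    have sp: "space G = space M" using sub by (simp add: subalgebra_def)
    interpret V: sigma_algebra "space M" "sets G"
      using sets.sigma_algebra_axioms[of G] sp by simp
    show ?thesis
      by (rule V.sigma_sets_subset) (use measurable_sets[OF W] sp in auto)
  qed
  show "indep_var borel (\<lambda>\<omega>. g (Y \<omega>)) borel W"
    unfolding indep_var_eq using gY WM indep_set_mono'[OF ind s1 s2] by simp
qed



locale sett = prob_space M for M :: "'a measure" +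
  fixes X :: "nat \<Rightarrow> 'a \<Rightarrow> real" and eps :: "nat \<Rightarrow> 'a \<Rightarrow> real"
    and F :: "nat \<Rightarrow> 'a measure" and B \<mu> :: real
  assumes X_meas: "\<And>s. s \<ge> 1 \<Longrightarrow> X s \<in> borel_measurable M"
    and X_bdd: "\<And>s. s \<ge> 1 \<Longrightarrow> AE \<omega> in M. 0 \<le> X s \<omega> \<and> X s \<omega> \<le> B"
    and X_mean: "\<And>s. s \<ge> 1 \<Longrightarrow> integral\<^sup>L M (X s) = \<mu>"
    and F_filt: "filtration (space M) F"
    and F_sub: "\<And>n. subalgebra M (F n)"
    and F_adapt: "\<And>s n. 1 \<le> s \<Longrightarrow> s \<le> n \<Longrightarrow> X s \<in> borel_measurable (F n)"
    and F_indep: "\<And>s n. n < s \<Longrightarrow>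
        indep_set (sets (vimage_algebra (space M) (X s) borel)) (sets (F n))"
    and eps_01: "\<And>s \<omega>. s \<ge> 1 \<Longrightarrow> \<omega> \<in> space M \<Longrightarrow> eps s \<omega> \<in> {0, 1}"
    and eps_pred: "\<And>s. s \<ge> 1 \<Longrightarrow> eps s \<in> borel_measurable (F (s - 1))"
begin

definition Z :: "real \<Rightarrow> nat \<Rightarrow> nat \<Rightarrow> 'a \<Rightarrow> real" where
  "Z l t0 n \<omega> = exp (\<Sum>s\<in>{t0..<n}. eps s \<omega> * (l * (X s \<omega> - \<mu>) - l\<^sup>2 * B\<^sup>2 / 8))"

lemma eps_F: assumes "1 \<le> s" "s \<le> n" shows "eps s \<in> borel_measurable (F (n - 1))"
proof -
  have "subalgebra (F (n - 1)) (F (s - 1))"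
    using F_sub[of "n-1"] F_sub[of "s-1"] filtration.sets_F_mono[OF F_filt, of "s-1" "n-1"] assms
    by (auto simp: subalgebra_def)
  then show ?thesis using eps_pred[OF assms(1)] by (meson measurable_from_subalg)
qed

lemma Z_meas: assumes "1 \<le> t0" shows "Z l t0 n \<in> borel_measurable (F (n - 1))"
proof -
  have "(\<lambda>\<omega>. \<Sum>s\<in>{t0..<n}. eps s \<omega> * (l * (X s \<omega> - \<mu>) - l\<^sup>2 * B\<^sup>2 / 8)) \<in> borel_measurable (F (n - 1))"
  proof (rule borel_measurable_sum)
    fix s assume s: "s \<in> {t0..<n}"
    then have "eps s \<in> borel_measurable (F (n - 1))" "X s \<in> borel_measurable (F (n - 1))"
      using assms eps_F[of s n] F_adapt[of s "n-1"] by auto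
    then show "(\<lambda>\<omega>. eps s \<omega> * (l * (X s \<omega> - \<mu>) - l\<^sup>2 * B\<^sup>2 / 8)) \<in> borel_measurable (F (n - 1))"
      by measurable
  qed
  then show ?thesis unfolding Z_def by measurable
qed

lemma ZM: assumes "1 \<le> t0" shows "Z l t0 n \<in> borel_measurable M"
  using Z_meas[OF assms] F_sub by (meson measurable_from_subalg)

lemma Z_int: assumes "1 \<le> t0" shows "integrable M (Z l t0 n)"
proof -
  define K where "K = \<bar>l\<bar> * (\<bar>B\<bar> + \<bar>\<mu>\<bar>) + l\<^sup>2 * B\<^sup>2 / 8"
  have "AE \<omega> in M. \<forall>s\<in>{t0..<n}. 0 \<le> X s \<omega> \<and> X s \<omega> \<le> B"
  proof (intro AE_finite_allI)
    fix s assume "s \<in> {t0..<n}"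
    then show "AE \<omega> in M. 0 \<le> X s \<omega> \<and> X s \<omega> \<le> B" using assms by (intro X_bdd) auto
  qed simp
  then have "AE \<omega> in M. norm (Z l t0 n \<omega>) \<le> exp (real (card {t0..<n}) * K)"
    using AE_space
  proof eventually_elim
    case (elim \<omega>)
    have "(\<Sum>s\<in>{t0..<n}. eps s \<omega> * (l * (X s \<omega> - \<mu>) - l\<^sup>2 * B\<^sup>2 / 8)) \<le> (\<Sum>s\<in>{t0..<n}. K)"
    proof (rule sum_mono)
      fix s assume s: "s \<in> {t0..<n}"
      then have e: "eps s \<omega> \<in> {0,1}" using eps_01 assms elim by auto
      have xb: "0 \<le> X s \<omega>" "X s \<omega> \<le> B" using elim s by auto
      have "\<bar>X s \<omega> - \<mu>\<bar> \<le> \<bar>B\<bar> + \<bar>\<mu>\<bar>" using xb by arith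
      then have "\<bar>l * (X s \<omega> - \<mu>)\<bar> \<le> \<bar>l\<bar> * (\<bar>B\<bar> + \<bar>\<mu>\<bar>)"
        unfolding abs_mult by (intro mult_left_mono) auto
      then have a: "l * (X s \<omega> - \<mu>) \<le> \<bar>l\<bar> * (\<bar>B\<bar> + \<bar>\<mu>\<bar>)" by (auto simp: abs_le_iff)
      have c: "l\<^sup>2 * B\<^sup>2 / 8 \<ge> 0" by simp
      have K0: "0 \<le> K" unfolding K_def by simp
      show "eps s \<omega> * (l * (X s \<omega> - \<mu>) - l\<^sup>2 * B\<^sup>2 / 8) \<le> K"
      proof (cases "eps s \<omega> = 0")
        case True then show ?thesis using K0 by simp
      next
        case False then have e1: "eps s \<omega> = 1" using e by auto
        have "eps s \<omega> * (l * (X s \<omega> - \<mu>) - l\<^sup>2 * B\<^sup>2 / 8) = l * (X s \<omega> - \<mu>) - l\<^sup>2 * B\<^sup>2 / 8"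
          by (simp add: e1)
        also have "\<dots> \<le> K" unfolding K_def using a c by linarith
        finally show ?thesis .
      qed
    qed
    then show ?case unfolding Z_def by simp
  qed
  then show ?thesis by (intro integrable_const_bound ZM assms)
qed

lemma Z_nonneg: "0 \<le> Z l t0 n \<omega>" unfolding Z_def by simp

lemma hoeff: assumes "s \<ge> 1" "l > 0"
  shows "(\<integral>\<omega>. exp (l * (X s \<omega> - \<mu>) - l\<^sup>2 * B\<^sup>2 / 8) \<partial>M) \<le> 1"
proof -
  interpret I: interval_bounded_random_variable M "X s" 0 B
    using X_meas[OF assms(1)] X_bdd[OF assms(1)] by unfold_locales auto
  have mu: "expectation (X s) = \<mu>" using X_mean assms by simp
  have i: "integrable M (\<lambda>\<omega>. exp (l * (X s \<omega> - \<mu>)))"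
  proof (rule integrable_const_bound[where B="exp (l * (B + \<bar>\<mu>\<bar>))"])
    show "AE x in M. norm (exp (l * (X s x - \<mu>))) \<le> exp (l * (B + \<bar>\<mu>\<bar>))"
      using X_bdd[OF assms(1)] by eventually_elim (use assms in auto)
    show "(\<lambda>\<omega>. exp (l * (X s \<omega> - \<mu>))) \<in> borel_measurable M" using X_meas[OF assms(1)] by measurable
  qed
  have "ennreal (\<integral>\<omega>. exp (l * (X s \<omega> - \<mu>)) \<partial>M) = (\<integral>\<^sup>+\<omega>. exp (l * (X s \<omega> - \<mu>)) \<partial>M)"
    by (rule nn_integral_eq_integral[symmetric]) (use i in auto)
  also have "\<dots> \<le> ennreal (exp (l\<^sup>2 * (B - 0)\<^sup>2 / 8))"
    using I.Hoeffdings_lemma_nn_integral[OF assms(2)] mu by simp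
  finally have h: "(\<integral>\<omega>. exp (l * (X s \<omega> - \<mu>)) \<partial>M) \<le> exp (l\<^sup>2 * B\<^sup>2 / 8)"
    by (subst (asm) ennreal_le_iff) auto
  have "(\<integral>\<omega>. exp (l * (X s \<omega> - \<mu>) - l\<^sup>2 * B\<^sup>2 / 8) \<partial>M)
       = (\<integral>\<omega>. exp (l * (X s \<omega> - \<mu>)) \<partial>M) * exp (- (l\<^sup>2 * B\<^sup>2 / 8))"
  proof -
    have "(\<lambda>\<omega>. exp (l * (X s \<omega> - \<mu>) - l\<^sup>2 * B\<^sup>2 / 8)) = (\<lambda>\<omega>. exp (l * (X s \<omega> - \<mu>)) * exp (- (l\<^sup>2 * B\<^sup>2 / 8)))"
      by (auto simp: exp_add[symmetric])
    then show ?thesis by simp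
  qed
  also have "\<dots> \<le> exp (l\<^sup>2 * B\<^sup>2 / 8) * exp (- (l\<^sup>2 * B\<^sup>2 / 8))"
    using h by (intro mult_right_mono) auto
  also have "\<dots> = 1" by (simp add: exp_minus)
  finally show ?thesis .
qed

lemma exp_int: assumes "s \<ge> 1"
  shows "integrable M (\<lambda>\<omega>. exp (l * (X s \<omega> - \<mu>) - c))"
proof (rule integrable_const_bound[where B="exp (\<bar>l\<bar> * (\<bar>B\<bar> + \<bar>\<mu>\<bar>) + \<bar>c\<bar>)"])
  show "AE x in M. norm (exp (l * (X s x - \<mu>) - c)) \<le> exp (\<bar>l\<bar> * (\<bar>B\<bar> + \<bar>\<mu>\<bar>) + \<bar>c\<bar>)"
    using X_bdd[OF assms(1)]
  proof eventually_elim
    case (elim x)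
    have "\<bar>X s x - \<mu>\<bar> \<le> \<bar>B\<bar> + \<bar>\<mu>\<bar>" using elim by arith
    then have "\<bar>l * (X s x - \<mu>)\<bar> \<le> \<bar>l\<bar> * (\<bar>B\<bar> + \<bar>\<mu>\<bar>)"
      unfolding abs_mult by (intro mult_left_mono) auto
    then have "l * (X s x - \<mu>) - c \<le> \<bar>l\<bar> * (\<bar>B\<bar> + \<bar>\<mu>\<bar>) + \<bar>c\<bar>" by arith
    then show ?case by simp
  qed
  show "(\<lambda>\<omega>. exp (l * (X s \<omega> - \<mu>) - c)) \<in> borel_measurable M" using X_meas[OF assms(1)] by measurable
qed

lemma Z_step: assumes t0: "1 \<le> t0" "t0 \<le> n" and l: "l > 0"
  shows "integral\<^sup>L M (Z l t0 (Suc n)) \<le> integral\<^sup>L M (Z l t0 n)"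
proof -
  have n1: "n \<ge> 1" using t0 by simp
  define g where "g x = exp (l * (x - \<mu>) - l\<^sup>2 * B\<^sup>2 / 8) - 1" for x
  define H where "H \<omega> = g (X n \<omega>) * (Z l t0 n \<omega> * eps n \<omega>)" for \<omega>
  have eq: "Z l t0 (Suc n) \<omega> = Z l t0 n \<omega> + H \<omega>" if \<omega>: "\<omega> \<in> space M" for \<omega>
  proof -
    have "Z l t0 (Suc n) \<omega> = Z l t0 n \<omega> * exp (eps n \<omega> * (l * (X n \<omega> - \<mu>) - l\<^sup>2 * B\<^sup>2 / 8))"
      unfolding Z_def using t0 by (simp add: exp_add)
    moreover have "eps n \<omega> \<in> {0,1}" using eps_01[OF n1 \<omega>] .
    ultimately show ?thesis unfolding H_def g_def by (auto simp: algebra_simps)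
  qed
  have gm: "g \<in> borel_measurable borel" unfolding g_def by measurable
  have Zi: "integrable M (Z l t0 n)" "integrable M (Z l t0 (Suc n))" using Z_int t0 by auto
  have Hi: "integrable M H"
  proof -
    have "integrable M (\<lambda>\<omega>. Z l t0 (Suc n) \<omega> - Z l t0 n \<omega>)" using Zi by auto
    moreover have "integrable M H = integrable M (\<lambda>\<omega>. Z l t0 (Suc n) \<omega> - Z l t0 n \<omega>)"
      by (rule Bochner_Integration.integrable_cong) (auto simp: eq)
    ultimately show ?thesis by simp
  qed
  have "integral\<^sup>L M (Z l t0 (Suc n)) = integral\<^sup>L M (\<lambda>\<omega>. Z l t0 n \<omega> + H \<omega>)"
    by (rule Bochner_Integration.integral_cong) (auto simp: eq)
  also have "\<dots> = integral\<^sup>L M (Z l t0 n) + integral\<^sup>L M H"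
    using Zi(1) Hi by (rule Bochner_Integration.integral_add)
  also have "integral\<^sup>L M H = (\<integral>\<omega>. g (X n \<omega>) \<partial>M) * (\<integral>\<omega>. Z l t0 n \<omega> * eps n \<omega> \<partial>M)"
    unfolding H_def
  proof (rule indep_prod_integral[OF F_indep[of "n - 1" n] F_sub X_meas[OF n1] gm])
    show "n - 1 < n" using n1 by simp
    show PF: "(\<lambda>\<omega>. Z l t0 n \<omega> * eps n \<omega>) \<in> borel_measurable (F (n - 1))"
      using Z_meas[OF t0(1), of l n] eps_F[of n n] n1 by measurable
    show "integrable M (\<lambda>\<omega>. g (X n \<omega>))" unfolding g_def
      using exp_int[OF n1, of l "l\<^sup>2 * B\<^sup>2 / 8"] by auto
    show "integrable M (\<lambda>\<omega>. Z l t0 n \<omega> * eps n \<omega>)"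
    proof (rule Bochner_Integration.integrable_bound[OF Zi(1)])
      show "(\<lambda>\<omega>. Z l t0 n \<omega> * eps n \<omega>) \<in> borel_measurable M"
        by (rule measurable_from_subalg[OF F_sub PF])
      show "AE x in M. norm (Z l t0 n x * eps n x) \<le> norm (Z l t0 n x)"
      proof (intro AE_I2)
        fix x assume x: "x \<in> space M"
        then have "eps n x = 0 \<or> eps n x = 1" using eps_01[OF n1 x] by auto
        then show "norm (Z l t0 n x * eps n x) \<le> norm (Z l t0 n x)" by auto
      qed
    qed
  qed
  finally have eqZ: "integral\<^sup>L M (Z l t0 (Suc n)) = integral\<^sup>L M (Z l t0 n) +
     (\<integral>\<omega>. g (X n \<omega>) \<partial>M) * (\<integral>\<omega>. Z l t0 n \<omega> * eps n \<omega> \<partial>M)" .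
  have "(\<integral>\<omega>. g (X n \<omega>) \<partial>M) \<le> 0"
  proof -
    have "(\<integral>\<omega>. g (X n \<omega>) \<partial>M) = (\<integral>\<omega>. exp (l * (X n \<omega> - \<mu>) - l\<^sup>2 * B\<^sup>2 / 8) \<partial>M) - 1"
      unfolding g_def using exp_int[OF n1, of l "l\<^sup>2 * B\<^sup>2 / 8"] by (simp add: prob_space)
    then show ?thesis using hoeff[OF n1 l] by simp
  qed
  moreover have "0 \<le> (\<integral>\<omega>. Z l t0 n \<omega> * eps n \<omega> \<partial>M)"
  proof (intro integral_nonneg_AE AE_I2)
    fix x assume x: "x \<in> space M"
    then have "eps n x = 0 \<or> eps n x = 1" using eps_01[OF n1 x] by auto
    then show "0 \<le> Z l t0 n x * eps n x" using Z_nonneg[of l t0 n x] by auto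
  qed
  ultimately have "(\<integral>\<omega>. g (X n \<omega>) \<partial>M) * (\<integral>\<omega>. Z l t0 n \<omega> * eps n \<omega> \<partial>M) \<le> 0"
    by (simp add: mult_nonpos_nonneg)
  then show ?thesis using eqZ by simp
qed

lemma Z_le1: assumes "1 \<le> t0" "t0 \<le> n" "l > 0" shows "integral\<^sup>L M (Z l t0 n) \<le> 1"
  using assms(2)
proof (induction n rule: dec_induct)
  case base
  then show ?case by (simp add: Z_def prob_space)
next
  case (step n)
  then show ?case using Z_step[OF assms(1) step(1) assms(3)] by linarith
qed

end


lemma slice_exists:
  fixes b y :: real
  assumes "b > 1" "1 \<le> y" "y \<le> b ^ D" "D \<ge> 1"
  shows "\<exists>k<D. b ^ k \<le> y \<and> y \<le> b ^ (k + 1)"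
  using assms(3,4)
proof (induction D)
  case 0 then show ?case by simp
next
  case (Suc D)
  show ?case
  proof (cases "D = 0")
    case True then show ?thesis using Suc.prems assms(2) by auto
  next
    case False
    show ?thesis
    proof (cases "y \<le> b ^ D")
      case True then show ?thesis using Suc False by (meson less_SucI less_one not_less)
    next
      case nF: False then show ?thesis using Suc.prems by (intro exI[of _ D]) auto
    qed
  qed
qed

lemma slice_bound:
  fixes x c q \<eta> \<delta> B S :: real
  assumes x: "x > 0" and c: "c > 0" and q: "1 \<le> q" "q \<le> 1 + \<eta> / 4"
    and xc: "c / q \<le> x" "x \<le> c * q" and \<delta>: "\<delta> > 0" and B: "B \<noteq> 0"
    and S: "S > \<delta> * x"
  shows "2 * \<delta>\<^sup>2 / B\<^sup>2 * (1 - \<eta>\<^sup>2 / 16)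
    \<le> (4 * \<delta> / (B\<^sup>2 * c)) * S - (4 * \<delta> / (B\<^sup>2 * c))\<^sup>2 * B\<^sup>2 / 8 * x\<^sup>2"
proof -
  define l where "l = 4 * \<delta> / (B\<^sup>2 * c)"
  define r where "r = x / c"
  have B2: "B\<^sup>2 > 0" using B by simp
  have l: "l > 0" unfolding l_def using \<delta> c B2 by simp
  have r1: "r \<le> q" unfolding r_def using xc c by (simp add: divide_le_eq algebra_simps)
  have r2: "1 / q \<le> r" unfolding r_def using xc c q by (simp add: le_divide_eq field_simps)
  have "1 - 1 / q \<le> q - 1"
  proof -
    have "q * (1 - 1/q) = q - 1" using q by (simp add: field_simps)
    also have "\<dots> \<le> q * (q - 1)" using q mult_right_mono[of 1 q "q - 1"] by simp
    finally show ?thesis using q by simp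
  qed
  then have "\<bar>1 - r\<bar> \<le> \<eta> / 4" using r1 r2 q by (intro abs_leI) linarith+
  then have sq0: "\<bar>1 - r\<bar>\<^sup>2 \<le> (\<eta> / 4)\<^sup>2" by (intro power_mono) auto
  then have sq: "(1 - r)\<^sup>2 \<le> (\<eta> / 4)\<^sup>2" by simp
  have "l * S \<ge> l * (\<delta> * x)" using l S by simp
  have eq: "l * (\<delta> * x) - l\<^sup>2 * B\<^sup>2 / 8 * x\<^sup>2 = 2 * \<delta>\<^sup>2 / B\<^sup>2 * (1 - (1 - r)\<^sup>2)"
    unfolding l_def r_def using c B2 by (simp add: field_simps power2_eq_square)
  have "2 * \<delta>\<^sup>2 / B\<^sup>2 * (1 - \<eta>\<^sup>2 / 16) \<le> 2 * \<delta>\<^sup>2 / B\<^sup>2 * (1 - (1 - r)\<^sup>2)"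
    using sq B2 by (intro mult_left_mono) (auto simp: power_divide)
  also have "\<dots> = l * (\<delta> * x) - l\<^sup>2 * B\<^sup>2 / 8 * x\<^sup>2" using eq by simp
  also have "\<dots> \<le> l * S - l\<^sup>2 * B\<^sup>2 / 8 * x\<^sup>2" using \<open>l * S \<ge> l * (\<delta> * x)\<close> by simp
  finally show ?thesis unfolding l_def .
qed


lemma pow_q: fixes q \<eta> :: real assumes q4: "q ^ 4 = 1 + \<eta>"
  shows "(q ^ (2 * k))\<^sup>2 = (1 + \<eta>) ^ k"
  unfolding q4[symmetric] power_mult[symmetric] by (simp add: mult.commute)

lemma (in sett) tail_bound:
  assumes "1 \<le> t0" "t0 \<le> n" "l > 0"
  shows "measure M {\<omega> \<in> space M. exp g \<le> Z l t0 n \<omega>} \<le> exp (- g)"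
proof -
  have "measure M {\<omega> \<in> space M. exp g \<le> Z l t0 n \<omega>} \<le> (\<integral>\<omega>. Z l t0 n \<omega> \<partial>M) / exp g"
    by (rule integral_Markov_inequality_measure[OF Z_int[OF assms(1)] sets.top])
       (auto simp: Z_nonneg)
  also have "\<dots> \<le> 1 / exp g"
    using Z_le1[OF assms] by (intro divide_right_mono) auto
  finally show ?thesis by (simp add: exp_minus inverse_eq_divide)
qed

theorem mainTheorem7:
  fixes M :: "'a measure" and X :: "nat \<Rightarrow> 'a \<Rightarrow> real" and eps :: "nat \<Rightarrow> 'a \<Rightarrow> real"
    and F :: "nat \<Rightarrow> 'a measure" and B \<mu> :: real and t \<tau> :: nat and \<delta> \<eta> :: real
  assumes M: "prob_space M"
    and X_meas: "\<And>s. s \<ge> 1 \<Longrightarrow> X s \<in> borel_measurable M"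
    and X_indep: "prob_space.indep_vars M (\<lambda>_. borel) X {1..}"
    and X_bdd: "\<And>s. s \<ge> 1 \<Longrightarrow> AE \<omega> in M. 0 \<le> X s \<omega> \<and> X s \<omega> \<le> B"
    and X_mean: "\<And>s. s \<ge> 1 \<Longrightarrow> integral\<^sup>L M (X s) = \<mu>"
    and F_filt: "filtration (space M) F"
    and F_sub: "\<And>n. subalgebra M (F n)"
    and F_adapt: "\<And>s n. 1 \<le> s \<Longrightarrow> s \<le> n \<Longrightarrow> X s \<in> borel_measurable (F n)"
    and F_indep: "\<And>s n. n < s \<Longrightarrow>
        prob_space.indep_set M (sets (vimage_algebra (space M) (X s) borel)) (sets (F n))"
    and eps_01: "\<And>s \<omega>. s \<ge> 1 \<Longrightarrow> \<omega> \<in> space M \<Longrightarrow> eps s \<omega> \<in> {0, 1}"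
    and eps_pred: "\<And>s. s \<ge> 1 \<Longrightarrow> eps s \<in> borel_measurable (F (s - 1))"
    and t: "t \<ge> 1" and tau: "\<tau> \<ge> 1" and min2: "min t \<tau> \<ge> 2"
    and delta: "\<delta> > 0" and eta: "\<eta> > 0"
  shows "measure M {\<omega> \<in> space M.
            (\<Sum>s\<in>{max 1 (t - \<tau> + 1)..t}. eps s \<omega>) > 0 \<and>
            (\<Sum>s\<in>{max 1 (t - \<tau> + 1)..t}. (X s \<omega> - \<mu>) * eps s \<omega>)
              / sqrt (\<Sum>s\<in>{max 1 (t - \<tau> + 1)..t}. eps s \<omega>) > \<delta>}
         \<le> real_of_int \<lceil>ln (real (min t \<tau>)) / ln (1 + \<eta>)\<rceil>
            * exp (- (2 * \<delta>\<^sup>2 / B\<^sup>2) * (1 - \<eta>\<^sup>2 / 16))"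
proof -
  interpret sett M X eps F B \<mu>
    unfolding sett_def sett_axioms_def
    using M X_meas X_bdd X_mean F_filt F_sub F_adapt F_indep eps_01 eps_pred by blast
  define t0 where "t0 = max 1 (t - \<tau> + 1)"
  define I where "I = {t0..t}"
  define m where "m = min t \<tau>"
  define N where "N \<omega> = (\<Sum>s\<in>I. eps s \<omega>)" for \<omega>
  define Sm where "Sm \<omega> = (\<Sum>s\<in>I. (X s \<omega> - \<mu>) * eps s \<omega>)" for \<omega>
  define A where "A = {\<omega> \<in> space M. N \<omega> > 0 \<and> Sm \<omega> / sqrt (N \<omega>) > \<delta>}"
  define \<gamma> where "\<gamma> = 2 * \<delta>\<^sup>2 / B\<^sup>2 * (1 - \<eta>\<^sup>2 / 16)"
  have t01: "1 \<le> t0" and t0t: "t0 \<le> t" unfolding t0_def using t tau by auto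
  have cardI: "card I = m" unfolding I_def t0_def m_def using t tau by (auto simp: max_def min_def)
  have m2: "m \<ge> 2" using min2 unfolding m_def .
  have lnm: "ln (real m) > 0" using m2 by (intro ln_gt_zero) auto
  have lne: "ln (1 + \<eta>) > 0" using eta by (intro ln_gt_zero) auto
  define D where "D = nat \<lceil>ln (real m) / ln (1 + \<eta>)\<rceil>"
  have ratio: "ln (real m) / ln (1 + \<eta>) > 0" using lnm lne by simp
  have RD: "real_of_int \<lceil>ln (real m) / ln (1 + \<eta>)\<rceil> = real D"
    unfolding D_def using ratio by (simp add: order.strict_implies_order)
  have D1: "D \<ge> 1" unfolding D_def using ratio by (simp add: Suc_le_eq)
  have mD: "real m \<le> (1 + \<eta>) ^ D"
  proof -
    have "ln (real m) / ln (1 + \<eta>) \<le> real_of_int \<lceil>ln (real m) / ln (1 + \<eta>)\<rceil>"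
      by (rule le_of_int_ceiling)
    then have "ln (real m) / ln (1 + \<eta>) \<le> real D" using RD by simp
    then have "ln (real m) \<le> real D * ln (1 + \<eta>)" using lne by (simp add: divide_le_eq)
    also have "\<dots> = ln ((1 + \<eta>) ^ D)" using eta by (simp add: ln_realpow)
    finally show ?thesis using m2 eta by (subst (asm) ln_le_cancel_iff) auto
  qed
  have goal_eq: "exp (- (2 * \<delta>\<^sup>2 / B\<^sup>2) * (1 - \<eta>\<^sup>2 / 16)) = exp (- \<gamma>)"
    unfolding \<gamma>_def by simp
  have A_eq: "{\<omega> \<in> space M.
            (\<Sum>s\<in>{max 1 (t - \<tau> + 1)..t}. eps s \<omega>) > 0 \<and>
            (\<Sum>s\<in>{max 1 (t - \<tau> + 1)..t}. (X s \<omega> - \<mu>) * eps s \<omega>)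
              / sqrt (\<Sum>s\<in>{max 1 (t - \<tau> + 1)..t}. eps s \<omega>) > \<delta>} = A"
    unfolding A_def N_def Sm_def I_def t0_def by simp
  have main: "measure M A \<le> real D * exp (- \<gamma>)"
  proof (cases "B = 0")
    case True
    then have "\<gamma> = 0" unfolding \<gamma>_def by simp
    moreover have "real D \<ge> 1" using D1 by simp
    then have "measure M A \<le> real D" using prob_le_1[of A] by linarith
    ultimately show ?thesis by simp
  next
    case Bne: False
    define q where "q = root 4 (1 + \<eta>)"
    have q4: "q ^ 4 = 1 + \<eta>" unfolding q_def using eta by (intro real_root_pow_pos2) auto
    have q0: "q > 0" unfolding q_def using eta by simp
    have q1: "q \<ge> 1"
    proof (rule ccontr)
      assume "\<not> q \<ge> 1"
      then have "q ^ 4 < 1 ^ 4" using q0 by (intro power_strict_mono) auto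
      then show False using q4 eta by simp
    qed
    have qe: "q \<le> 1 + \<eta> / 4"
    proof (rule ccontr)
      assume "\<not> q \<le> 1 + \<eta> / 4"
      then have "(1 + \<eta> / 4) ^ 4 < q ^ 4" using eta by (intro power_strict_mono) auto
      moreover have "1 + real 4 * (\<eta> / 4) \<le> (1 + \<eta> / 4) ^ 4"
        using eta by (intro Bernoulli_inequality) auto
      ultimately show False using q4 by simp
    qed
    define lam where "lam k = 4 * \<delta> / (B\<^sup>2 * q ^ (2 * k + 1))" for k
    have lam0: "lam k > 0" for k unfolding lam_def using delta q0 Bne by simp
    define E where "E k = {\<omega> \<in> space M. exp \<gamma> \<le> Z (lam k) t0 (Suc t) \<omega>}" for k
    have Zform: "Z l t0 (Suc t) \<omega> = exp (l * Sm \<omega> - l\<^sup>2 * B\<^sup>2 / 8 * N \<omega>)" for l \<omega>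
    proof -
      have "{t0..<Suc t} = I" unfolding I_def by auto
      moreover have "(\<Sum>s\<in>I. eps s \<omega> * (l * (X s \<omega> - \<mu>) - l\<^sup>2 * B\<^sup>2 / 8))
          = l * Sm \<omega> - l\<^sup>2 * B\<^sup>2 / 8 * N \<omega>"
      proof -
        have "(\<Sum>s\<in>I. eps s \<omega> * (l * (X s \<omega> - \<mu>) - l\<^sup>2 * B\<^sup>2 / 8))
            = (\<Sum>s\<in>I. l * ((X s \<omega> - \<mu>) * eps s \<omega>) - l\<^sup>2 * B\<^sup>2 / 8 * eps s \<omega>)"
          by (rule sum.cong) (simp_all add: algebra_simps)
        also have "\<dots> = l * Sm \<omega> - l\<^sup>2 * B\<^sup>2 / 8 * N \<omega>"
          unfolding Sm_def N_def by (simp add: sum_subtractf sum_distrib_left)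
        finally show ?thesis .
      qed
      ultimately show ?thesis unfolding Z_def by simp
    qed
    have sub: "A \<subseteq> (\<Union>k\<in>{..<D}. E k)"
    proof
      fix \<omega> assume "\<omega> \<in> A"
      then have \<omega>: "\<omega> \<in> space M" and Npos: "N \<omega> > 0" and Sd: "Sm \<omega> / sqrt (N \<omega>) > \<delta>"
        unfolding A_def by auto
      have e01: "eps s \<omega> \<in> {0, 1}" if "s \<in> I" for s
        using eps_01[OF _ \<omega>] that t01 unfolding I_def by auto
      have N1: "N \<omega> \<ge> 1"
      proof -
        obtain s where s: "s \<in> I" "eps s \<omega> \<noteq> 0"
        proof (rule ccontr)
          assume "\<not> thesis"
          then have "\<forall>s\<in>I. eps s \<omega> = 0" using that by blast
          then have "N \<omega> = 0" unfolding N_def by simp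
          then show False using Npos by simp
        qed
        then have "eps s \<omega> = 1" using e01 by auto
        moreover have "eps s \<omega> \<le> N \<omega>"
        proof -
          have nn: "0 \<le> eps s' \<omega>" if "s' \<in> I" for s' using e01[OF that] by auto
          have fin: "finite I" unfolding I_def by simp
          show ?thesis unfolding N_def by (intro member_le_sum) (use s nn fin in auto)
        qed
        ultimately show ?thesis by simp
      qed
      have Nm: "N \<omega> \<le> real m"
      proof -
        have le1: "eps s \<omega> \<le> 1" if "s \<in> I" for s using e01[OF that] by auto
        have "N \<omega> \<le> (\<Sum>s\<in>I. 1)" unfolding N_def using le1 by (intro sum_mono) auto
        then show ?thesis using cardI by simp
      qed
      obtain k where k: "k < D" "(1 + \<eta>) ^ k \<le> N \<omega>" "N \<omega> \<le> (1 + \<eta>) ^ (k + 1)"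
        using slice_exists[of "1 + \<eta>" "N \<omega>" D] eta N1 Nm mD D1 by auto
      define x where "x = sqrt (N \<omega>)"
      define c where "c = q ^ (2 * k + 1)"
      have x0: "x > 0" unfolding x_def using Npos by simp
      have x2: "x\<^sup>2 = N \<omega>" unfolding x_def using Npos by simp
      have c0: "c > 0" unfolding c_def using q0 by simp
      have cq1: "c / q = q ^ (2 * k)" unfolding c_def using q0 by simp
      have cq2: "c * q = q ^ (2 * (k + 1))" unfolding c_def by simp
      have p1: "(q ^ (2 * k))\<^sup>2 = (1 + \<eta>) ^ k" by (rule pow_q[OF q4])
      have p2: "(q ^ (2 * (k + 1)))\<^sup>2 = (1 + \<eta>) ^ (k + 1)" by (rule pow_q[OF q4])
      have xc1: "c / q \<le> x" unfolding cq1
        by (rule power2_le_imp_le) (use p1 k x2 x0 in auto)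
      have xc2: "x \<le> c * q" unfolding cq2
        by (rule power2_le_imp_le) (use p2 k x2 q0 in auto)
      have S: "Sm \<omega> > \<delta> * x" using Sd x0 unfolding x_def by (simp add: pos_less_divide_eq mult.commute)
      have "\<gamma> \<le> lam k * Sm \<omega> - (lam k)\<^sup>2 * B\<^sup>2 / 8 * x\<^sup>2"
        unfolding \<gamma>_def lam_def c_def[symmetric]
        by (rule slice_bound[OF x0 c0 q1 qe xc1 xc2 delta Bne S])
      then have "\<gamma> \<le> lam k * Sm \<omega> - (lam k)\<^sup>2 * B\<^sup>2 / 8 * N \<omega>" by (simp only: x2)
      then have "exp \<gamma> \<le> Z (lam k) t0 (Suc t) \<omega>" unfolding Zform by simp
      then have "\<omega> \<in> E k" using \<omega> unfolding E_def by simp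
      moreover have "k \<in> {..<D}" using k(1) by simp
      ultimately show "\<omega> \<in> (\<Union>k\<in>{..<D}. E k)" by (rule UN_I[rotated])
    qed
    have Emeas: "E k \<in> sets M" for k
      unfolding E_def by (rule borel_measurable_le[OF borel_measurable_const ZM[OF t01]])
    have "measure M A \<le> measure M (\<Union>k\<in>{..<D}. E k)"
      using Emeas by (intro finite_measure_mono[OF sub] sets.finite_UN) auto
    also have "\<dots> \<le> (\<Sum>k\<in>{..<D}. measure M (E k))"
      using Emeas by (intro finite_measure_subadditive_finite) auto
    also have "\<dots> \<le> (\<Sum>k\<in>{..<D}. exp (- \<gamma>))"
      unfolding E_def using t01 t0t lam0
      by (intro sum_mono tail_bound) auto
    also have "\<dots> = real D * exp (- \<gamma>)" by simp
    finally show ?thesis .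
  qed
  show ?thesis unfolding A_eq goal_eq using main RD unfolding m_def by simp
qed


end
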